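(* Let $\mathcal{A}$ be a pOC with state set $Q$ and let $p,q\in Q$. If $\mathrm{Pre}^*(q(0))\cap\mathrm{Post}^*(p(1))$ is finite, then $$|\mathrm{Pre}^*(q(0))\cap\mathrm{Post}^*(p(1))|\le|Q|^2\cdot(|Q|+2).$$
   Context: A pOC is $\mathcal{A}=(Q,\delta^{=0},\delta^{>0},P^{=0},P^{>0})$ with the following components. - $\delta^{>0}\subseteq Q\times\{-1,0,1\}\times Q$ are the positive rules and $\delta^{=0}\subseteq Q\times\{0,1\}\times Q$ are the zero rules. Every state has both kinds of outgoing rule. - $P^{>0}$ and $P^{=0}$ are positive probability distributions over the outgoing rules of each state. The Markov chain $\mathcal{M}_\mathcal{A}$ on configurations $p(i)\in Q\times\mathbb{N}_0$ has the following transitions: - $p(0)\to q(c)$ iff $(p,c,q)\in\delta^{=0}$; - for $i\ge1$, $p(i)\to q(i+c)$ iff $(p,c,q)\in\delta^{>0}$. $\mathrm{Pre}^*(C)$ is the set of configurations from which $C$ is reachable in $\mathcal{M}_\mathcal{A}$. $\mathrm{Post}^*(C)$ is the set of configurations reachable from $C$. *)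

theory Defs
  imports Complex_Main
begin

text \<open>A probabilistic one-counter automaton (pOC). Rules are triples (p, c, q) with
  counter change c. Configurations are pairs (state, counter value).\<close>

record 'q poc =
  states :: "'q set"
  delta_zero :: "('q \<times> int \<times> 'q) set"
  delta_pos :: "('q \<times> int \<times> 'q) set"
  P_zero :: "('q \<times> int \<times> 'q) \<Rightarrow> real"
  P_pos :: "('q \<times> int \<times> 'q) \<Rightarrow> real"

definition out_rules :: "('q \<times> int \<times> 'q) set \<Rightarrow> 'q \<Rightarrow> ('q \<times> int \<times> 'q) set" where
  "out_rules \<delta> p = {r \<in> \<delta>. fst r = p}"

definition valid_poc :: "'q poc \<Rightarrow> bool" where
  "valid_poc A \<longleftrightarrow>
     finite (states A) \<and>
     delta_zero A \<subseteq> states A \<times> {0, 1} \<times> states A \<and>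
     delta_pos A \<subseteq> states A \<times> {-1, 0, 1} \<times> states A \<and>
     (\<forall>p \<in> states A. out_rules (delta_zero A) p \<noteq> {} \<and> out_rules (delta_pos A) p \<noteq> {}) \<and>
     (\<forall>r \<in> delta_zero A. P_zero A r > 0) \<and>
     (\<forall>r \<in> delta_pos A. P_pos A r > 0) \<and>
     (\<forall>p \<in> states A. (\<Sum>r \<in> out_rules (delta_zero A) p. P_zero A r) = 1) \<and>
     (\<forall>p \<in> states A. (\<Sum>r \<in> out_rules (delta_pos A) p. P_pos A r) = 1)"

type_synonym 'q config = "'q \<times> nat"

definition configs :: "'q poc \<Rightarrow> 'q config set" where
  "configs A = states A \<times> UNIV"

definition step :: "'q poc \<Rightarrow> 'q config \<Rightarrow> 'q config \<Rightarrow> bool" where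
  "step A x y \<longleftrightarrow>
     (case x of (p, i) \<Rightarrow> case y of (q, j) \<Rightarrow>
        (i = 0 \<and> (p, int j, q) \<in> delta_zero A) \<or>
        (i \<ge> 1 \<and> (p, int j - int i, q) \<in> delta_pos A))"

definition Post_star :: "'q poc \<Rightarrow> 'q config set \<Rightarrow> 'q config set" where
  "Post_star A C = {y. \<exists>x \<in> C. (step A)\<^sup>*\<^sup>* x y}"

definition Pre_star :: "'q poc \<Rightarrow> 'q config set \<Rightarrow> 'q config set" where
  "Pre_star A C = {x. \<exists>y \<in> C. (step A)\<^sup>*\<^sup>* x y}"

end

theory Submission
  imports Defs
begin

definition G :: "'q poc \<Rightarrow> nat \<Rightarrow> 'q config \<Rightarrow> 'q config \<Rightarrow> bool" where
  "G A j = (\<lambda>u v. step A u v \<and> j \<le> snd u \<and> j \<le> snd v)\<^sup>*\<^sup>*"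

lemma G_refl: "G A j u u"
  by (simp add: G_def)

lemma G_snoc: "G A j u y \<Longrightarrow> step A y z \<Longrightarrow> j \<le> snd y \<Longrightarrow> j \<le> snd z \<Longrightarrow> G A j u z"
  unfolding G_def by (rule rtranclp.rtrancl_into_rtrancl) auto

lemma G_cons: "step A x y \<Longrightarrow> G A j y z \<Longrightarrow> j \<le> snd x \<Longrightarrow> j \<le> snd y \<Longrightarrow> G A j x z"
  unfolding G_def by (rule converse_rtranclp_into_rtranclp) auto

lemma G_trans: "G A j x y \<Longrightarrow> G A j y z \<Longrightarrow> G A j x z"
  unfolding G_def by (rule rtranclp_trans)

lemma G_imp: "G A j x y \<Longrightarrow> (step A)\<^sup>*\<^sup>* x y"
  unfolding G_def by (induction rule: rtranclp_induct) (auto intro: rtranclp.rtrancl_into_rtrancl)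

lemma step_shift: "step A (a,i) (b,i') \<Longrightarrow> 1 \<le> i \<Longrightarrow> step A (a,i+d) (b,i'+d)"
  unfolding step_def by auto

lemma G_shift: assumes "1 \<le> j" "G A j u v"
  shows "G A (j+d) (fst u, snd u + d) (fst v, snd v + d)"
  using assms(2) unfolding G_def
proof (induction rule: rtranclp_induct)
  case base then show ?case by simp
next
  case (step y z)
  have "step A (fst y, snd y + d) (fst z, snd z + d)"
    using step_shift[of A "fst y" "snd y" "fst z" "snd z" d] step(2) assms(1) by auto
  then show ?case using step by (auto intro: rtranclp.rtrancl_into_rtrancl)
qed

lemma step_bound: assumes "valid_poc A" "step A x y"
  shows "snd y \<le> snd x + 1 \<and> snd x \<le> snd y + 1 \<and> fst y \<in> states A"
proof -
  obtain a i b i' where x: "x = (a,i)" and y: "y = (b,i')" by (cases x, cases y) auto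
  have z: "delta_zero A \<subseteq> states A \<times> {0, 1} \<times> states A"
    and p: "delta_pos A \<subseteq> states A \<times> {-1, 0, 1} \<times> states A"
    using assms(1) unfolding valid_poc_def by auto
  show ?thesis using assms(2) z p unfolding x y step_def by auto
qed

lemma reach_states: assumes "valid_poc A" "(step A)\<^sup>*\<^sup>* x y" "fst x \<in> states A"
  shows "fst y \<in> states A"
  using assms(2,3) by (induction rule: rtranclp_induct) (use step_bound[OF assms(1)] in auto)

lemma asc: assumes valid: "valid_poc A" and "(step A)\<^sup>*\<^sup>* x y"
  shows "\<exists>a. \<forall>j. snd x \<le> j \<and> j \<le> snd y \<longrightarrow> (step A)\<^sup>*\<^sup>* x (a j, j) \<and> G A j (a j, j) y
     \<and> (\<forall>j'. j \<le> j' \<and> j' \<le> snd y \<longrightarrow> G A j (a j, j) (a j', j'))"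
  using assms(2)
proof (induction rule: rtranclp_induct)
  case base
  show ?case
    by (rule exI[of _ "\<lambda>j. fst x"]) (auto simp: G_refl)
next
  case (step y z)
  obtain a where a: "\<forall>j. snd x \<le> j \<and> j \<le> snd y \<longrightarrow> (step A)\<^sup>*\<^sup>* x (a j, j) \<and> G A j (a j, j) y
     \<and> (\<forall>j'. j \<le> j' \<and> j' \<le> snd y \<longrightarrow> G A j (a j, j) (a j', j'))" using step.IH by blast
  have bd: "snd z \<le> snd y + 1" "snd y \<le> snd z + 1" using step_bound[OF valid step(2)] by auto
  have xz: "(step A)\<^sup>*\<^sup>* x z" using step(1,2) by (rule rtranclp.rtrancl_into_rtrancl)
  show ?case
  proof (cases "snd z \<le> snd y")
    case True
    show ?thesis
    proof (rule exI[of _ a], intro allI impI, intro conjI)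
      fix j assume j: "snd x \<le> j \<and> j \<le> snd z"
      then show "(step A)\<^sup>*\<^sup>* x (a j, j)" using a True by auto
      have "G A j (a j, j) y" "j \<le> snd y" "j \<le> snd z" using a j True by auto
      then show "G A j (a j, j) z" using step(2) G_snoc by blast
      show "\<forall>j'. j \<le> j' \<and> j' \<le> snd z \<longrightarrow> G A j (a j, j) (a j', j')" using a j True by auto
    qed
  next
    case False
    then have zz: "snd z = snd y + 1" using bd by auto
    show ?thesis
    proof (rule exI[of _ "a(snd z := fst z)"], intro allI impI, intro conjI)
      fix j assume j: "snd x \<le> j \<and> j \<le> snd z"
      show "(step A)\<^sup>*\<^sup>* x ((a(snd z := fst z)) j, j)"
        proof (cases "j = snd z")
        case True then have "((a(snd z := fst z)) j, j) = z" by simp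
        then show ?thesis using xz by simp
      next
        case False then show ?thesis using a j zz by auto
      qed
      show "G A j ((a(snd z := fst z)) j, j) z"
      proof (cases "j = snd z")
        case True then show ?thesis by (simp add: G_refl)
      next
        case False
        then have "j \<le> snd y" using j zz by auto
        then have "G A j (a j, j) y" "j \<le> snd y" "j \<le> snd z" using a j zz by auto
        then show ?thesis using step(2) False G_snoc by fastforce
      qed
      show "\<forall>j'. j \<le> j' \<and> j' \<le> snd z \<longrightarrow> G A j ((a(snd z := fst z)) j, j) ((a(snd z := fst z)) j', j')"
      proof (intro allI impI)
        fix j' assume j': "j \<le> j' \<and> j' \<le> snd z"
        show "G A j ((a(snd z := fst z)) j, j) ((a(snd z := fst z)) j', j')"
        proof (cases "j' = snd z")
          case True
          show ?thesis
          proof (cases "j = snd z")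
            case True then show ?thesis using \<open>j' = snd z\<close> by (simp add: G_refl)
          next
            case False
            then have "j \<le> snd y" using j zz by auto
            then have "G A j (a j, j) y" "j \<le> snd y" "j \<le> snd z" using a j zz by auto
            then have "G A j (a j, j) z" using step(2) G_snoc by blast
            then show ?thesis using True False by simp
          qed
        next
          case False
          then show ?thesis using a j j' zz by auto
        qed
      qed
    qed
  qed
qed

lemma desc: assumes valid: "valid_poc A" and "(step A)\<^sup>*\<^sup>* x y"
  shows "\<exists>b. \<forall>j. snd y \<le> j \<and> j \<le> snd x \<longrightarrow> (step A)\<^sup>*\<^sup>* (b j, j) y \<and> G A j x (b j, j)
     \<and> (\<forall>j'. j \<le> j' \<and> j' \<le> snd x \<longrightarrow> G A j (b j', j') (b j, j))"
  using assms(2)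
proof (induction rule: converse_rtranclp_induct)
  case base
  show ?case
    by (rule exI[of _ "\<lambda>j. fst y"]) (auto simp: G_refl)
next
  case (step x x')
  obtain b where b: "\<forall>j. snd y \<le> j \<and> j \<le> snd x' \<longrightarrow> (step A)\<^sup>*\<^sup>* (b j, j) y \<and> G A j x' (b j, j)
     \<and> (\<forall>j'. j \<le> j' \<and> j' \<le> snd x' \<longrightarrow> G A j (b j', j') (b j, j))" using step.IH by blast
  have bd: "snd x \<le> snd x' + 1" "snd x' \<le> snd x + 1" using step_bound[OF valid step(1)] by auto
  have xy: "(step A)\<^sup>*\<^sup>* x y" using step(1,2) by (rule converse_rtranclp_into_rtranclp)
  show ?case
  proof (cases "snd x \<le> snd x'")
    case True
    show ?thesis
    proof (rule exI[of _ b], intro allI impI, intro conjI)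
      fix j assume j: "snd y \<le> j \<and> j \<le> snd x"
      then show "(step A)\<^sup>*\<^sup>* (b j, j) y" using b True by auto
      have "G A j x' (b j, j)" "j \<le> snd x" "j \<le> snd x'" using b j True by auto
      then show "G A j x (b j, j)" using step(1) G_cons by blast
      show "\<forall>j'. j \<le> j' \<and> j' \<le> snd x \<longrightarrow> G A j (b j', j') (b j, j)" using b j True by auto
    qed
  next
    case False
    then have xx: "snd x = snd x' + 1" using bd by auto
    show ?thesis
    proof (rule exI[of _ "b(snd x := fst x)"], intro allI impI, intro conjI)
      fix j assume j: "snd y \<le> j \<and> j \<le> snd x"
      show "(step A)\<^sup>*\<^sup>* ((b(snd x := fst x)) j, j) y"
        proof (cases "j = snd x")
        case True then have "((b(snd x := fst x)) j, j) = x" by simp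
        then show ?thesis using xy by simp
      next
        case False then show ?thesis using b j xx by auto
      qed
      show "G A j x ((b(snd x := fst x)) j, j)"
      proof (cases "j = snd x")
        case True then show ?thesis by (simp add: G_refl)
      next
        case False
        then have "j \<le> snd x'" using j xx by auto
        then have "G A j x' (b j, j)" "j \<le> snd x'" "j \<le> snd x" using b j xx by auto
        then show ?thesis using step(1) False G_cons by fastforce
      qed
      show "\<forall>j'. j \<le> j' \<and> j' \<le> snd x \<longrightarrow> G A j ((b(snd x := fst x)) j', j') ((b(snd x := fst x)) j, j)"
      proof (intro allI impI)
        fix j' assume j': "j \<le> j' \<and> j' \<le> snd x"
        show "G A j ((b(snd x := fst x)) j', j') ((b(snd x := fst x)) j, j)"
        proof (cases "j' = snd x")
          case True
          show ?thesis
          proof (cases "j = snd x")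
            case True then show ?thesis using \<open>j' = snd x\<close> by (simp add: G_refl)
          next
            case False
            then have "j \<le> snd x'" using j xx by auto
            then have "G A j x' (b j, j)" "j \<le> snd x'" "j \<le> snd x" using b j xx by auto
            then have "G A j x (b j, j)" using step(1) G_cons by blast
            then show ?thesis using True False by simp
          qed
        next
          case False
          then show ?thesis using b j j' xx by auto
        qed
      qed
    qed
  qed
qed

lemma pump:
  assumes "1 \<le> j" "j < j'" "G A j (a,j) (a,j')" "G A j (b,j') (b,j)" "G A j (a,j) (b,j)"
    "(step A)\<^sup>*\<^sup>* (p,1) (a,j)" "(step A)\<^sup>*\<^sup>* (b,j) (q,0)"
  shows "infinite (Pre_star A {(q,0)} \<inter> Post_star A {(p,1)})"
proof
  assume fin: "finite (Pre_star A {(q,0)} \<inter> Post_star A {(p,1)})"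
  define d where "d = j' - j"
  have dpos: "d > 0" and j'eq: "j' = j + d" using assms(2) by (auto simp: d_def)
  have up: "(step A)\<^sup>*\<^sup>* (p,1) (a, j + m*d)" for m
  proof (induction m)
    case 0 then show ?case using assms(6) by simp
  next
    case (Suc m)
    have "G A (j + m*d) (a, j + m*d) (a, j' + m*d)"
      using G_shift[OF assms(1) assms(3), of "m*d"] by simp
    then have "(step A)\<^sup>*\<^sup>* (a, j + m*d) (a, j + Suc m * d)"
      using G_imp j'eq by (simp add: algebra_simps)
    then show ?case using Suc rtranclp_trans by metis
  qed
  have down: "(step A)\<^sup>*\<^sup>* (b, j + m*d) (q,0)" for m
  proof (induction m)
    case 0 then show ?case using assms(7) by simp
  next
    case (Suc m)
    have "G A (j + m*d) (b, j' + m*d) (b, j + m*d)"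
      using G_shift[OF assms(1) assms(4), of "m*d"] by simp
    then have "(step A)\<^sup>*\<^sup>* (b, j + Suc m * d) (b, j + m*d)"
      using G_imp j'eq by (simp add: algebra_simps)
    then show ?case using Suc rtranclp_trans by metis
  qed
  have mid: "(step A)\<^sup>*\<^sup>* (a, j + m*d) (b, j + m*d)" for m
    using G_imp[OF G_shift[OF assms(1) assms(5), of "m*d"]] by simp
  have sub: "(\<lambda>m. (a, j + m*d)) ` UNIV \<subseteq> Pre_star A {(q,0)} \<inter> Post_star A {(p,1)}"
    using up down mid unfolding Pre_star_def Post_star_def
    by (auto intro: rtranclp_trans)
  have "inj (\<lambda>m::nat. (a, j + m*d))" using dpos by (auto simp: inj_def)
  then have "finite (UNIV::nat set)"
    using finite_subset[OF sub fin] finite_imageD by blast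
  then show False by simp
qed

theorem mainTheorem6:
  fixes A :: "'q poc" and p q :: 'q
  assumes "valid_poc A"
    and "p \<in> states A" and "q \<in> states A"
    and "finite (Pre_star A {(q, 0)} \<inter> Post_star A {(p, 1)})"
  shows "card (Pre_star A {(q, 0)} \<inter> Post_star A {(p, 1)})
           \<le> card (states A) ^ 2 * (card (states A) + 2)"
proof -
  let ?S = "Pre_star A {(q, 0)} \<inter> Post_star A {(p, 1)}"
  let ?n = "card (states A)"
  have finQ: "finite (states A)" using assms(1) unfolding valid_poc_def by auto
  have npos: "?n \<ge> 1" using assms(2) finQ card_0_eq by (metis One_nat_def Suc_leI empty_iff neq0_conv)
  have bound: "r \<in> states A \<and> k \<le> ?n^2" if rk: "(r,k) \<in> ?S" for r k
  proof -
    have pr: "(step A)\<^sup>*\<^sup>* (p,1) (r,k)" and rq: "(step A)\<^sup>*\<^sup>* (r,k) (q,0)"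
      using rk unfolding Pre_star_def Post_star_def by auto
    have rQ: "r \<in> states A" using reach_states[OF assms(1) pr] assms(2) by simp
    have "k \<le> ?n^2"
    proof (rule ccontr)
      assume kb: "\<not> k \<le> ?n^2"
      obtain a where a: "\<forall>j. 1 \<le> j \<and> j \<le> k \<longrightarrow> (step A)\<^sup>*\<^sup>* (p,1) (a j, j) \<and> G A j (a j, j) (r,k)
         \<and> (\<forall>j'. j \<le> j' \<and> j' \<le> k \<longrightarrow> G A j (a j, j) (a j', j'))"
        using asc[OF assms(1) pr] by auto
      obtain b where b: "\<forall>j. 0 \<le> j \<and> j \<le> k \<longrightarrow> (step A)\<^sup>*\<^sup>* (b j, j) (q,0) \<and> G A j (r,k) (b j, j)
         \<and> (\<forall>j'. j \<le> j' \<and> j' \<le> k \<longrightarrow> G A j (b j', j') (b j, j))"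
        using desc[OF assms(1) rq] by auto
      define f where "f j = (a j, b j)" for j
      have img: "f ` {1..k} \<subseteq> states A \<times> states A"
      proof
        fix x assume "x \<in> f ` {1..k}"
        then obtain j where j: "j \<in> {1..k}" "x = f j" by auto
        have "a j \<in> states A" using reach_states[OF assms(1), of "(p,1)" "(a j, j)"] a j assms(2) by auto
        moreover have "b j \<in> states A"
          using reach_states[OF assms(1) G_imp, of j "(r,k)" "(b j, j)"] b j rQ by auto
        ultimately show "x \<in> states A \<times> states A" using j by (simp add: f_def)
      qed
      have "\<not> inj_on f {1..k}"
      proof
        assume "inj_on f {1..k}"
        then have "card {1..k} \<le> card (states A \<times> states A)"
          using card_inj_on_le[OF _ img] finQ by blast
        then show False using kb by (simp add: card_cartesian_product power2_eq_square)
      qed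
      then obtain j1 j2 where jj: "j1 \<in> {1..k}" "j2 \<in> {1..k}" "j1 \<noteq> j2" "f j1 = f j2"
        unfolding inj_on_def by blast
      obtain j j' where jj': "j \<in> {1..k}" "j' \<in> {1..k}" "j < j'" "f j = f j'"
        using jj by (metis linorder_neqE_nat)
      have ae: "a j' = a j" and be: "b j' = b j" using jj'(4) by (auto simp: f_def)
      have inf: "infinite ?S"
      proof (rule pump[of j j' A "a j" "b j" p q])
        show "1 \<le> j" "j < j'" using jj' by auto
        have "G A j (a j, j) (a j', j')" using a jj' by auto
        then show "G A j (a j, j) (a j, j')" using ae by simp
        have "G A j (b j', j') (b j, j)" using b jj' by auto
        then show "G A j (b j, j') (b j, j)" using be by simp
        have "G A j (a j, j) (r,k)" "G A j (r,k) (b j, j)" using a b jj' by auto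
        then show "G A j (a j, j) (b j, j)" by (rule G_trans)
        show "(step A)\<^sup>*\<^sup>* (p, 1) (a j, j)" using a jj' by auto
        show "(step A)\<^sup>*\<^sup>* (b j, j) (q, 0)" using b jj' by auto
      qed
      then show False using assms(4) by simp
    qed
    then show ?thesis using rQ by simp
  qed
  have "?S \<subseteq> states A \<times> {0..?n^2}" using bound by auto
  then have "card ?S \<le> card (states A \<times> {0..?n^2})"
    using finQ by (intro card_mono) auto
  also have "\<dots> = ?n * (?n^2 + 1)" by (simp add: card_cartesian_product)
  also have "\<dots> \<le> ?n^2 * (?n + 2)"
  proof -
    have "?n \<le> ?n * ?n" using npos by simp
    then have "?n \<le> 2 * (?n * ?n)" by linarith
    then have "?n \<le> ?n * ?n + ?n * ?n" by linarith
    then show ?thesis by (simp add: power2_eq_square algebra_simps)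
  qed
  finally show ?thesis .
qed

end
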